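(* Let $u_{tm}=0110100110010110\cdots$ be the Thue–Morse word and $a_{tm}=\tfrac12,1,\tfrac34,\tfrac14,\ldots$ the canonical representative of its valid permutation. (i) The valid permutation of the word $0\,u'$, where $u'=1221211221121221\cdots$ is the Thue–Morse word written over the alphabet $\{1,2\}$ (with $1<2$), is ergodic, with canonical representative $0,\tfrac12,1,\tfrac34,\tfrac14,\ldots$ (that is, $0$ followed by $a_{tm}$). (ii) The valid permutation of the word $2\,u_{tm}=20110100110010110\cdots$ is not ergodic.
   Context: For an aperiodic infinite word $u$ over $\{0,\ldots,q-1\}$, the valid permutation $\alpha_u$ is the infinite permutation with $\alpha_u[i]<\alpha_u[j]$ iff the shift $T^iu=u[i]u[i+1]\cdots$ is lexicographically smaller than $T^ju$. An infinite permutation is an equivalence class of real sequences with pairwise distinct elements under $(a[n])\sim(b[n])$ iff $a[i]<a[j]\Leftrightarrow b[i]<b[j]$ for all $i,j$. A real sequence $(a[i])_{i\ge0}$ is canonical if its elements are pairwise distinct, lie in $[0,1]$, and for every $t\in[0,1]$, $\#\{0\le k<n: a[j+k]<t\}/n\to t$ as $n\to\infty$ uniformly in $j$; a permutation is ergodic if it has a canonical representative. The sequence $a_{tm}$ is the fixed point starting with $\tfrac12$ of the morphism $x\mapsto(\tfrac x2+\tfrac14,\tfrac x2+\tfrac34)$ for $0\le x\le\tfrac12$, $x\mapsto(\tfrac x2+\tfrac14,\tfrac x2-\tfrac14)$ for $\tfrac12<x\le1$. *)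

theory Defs
  imports Complex_Main
begin

function tm :: "nat \<Rightarrow> nat" where
  "tm n = (if n = 0 then 0 else if even n then tm (n div 2) else 1 - tm (n div 2))"
  by auto
termination by (relation "measure id") auto

declare tm.simps[simp del]

definition shift :: "nat \<Rightarrow> (nat \<Rightarrow> nat) \<Rightarrow> (nat \<Rightarrow> nat)" where
  "shift i u = (\<lambda>k. u (i + k))"

definition lex_less :: "(nat \<Rightarrow> nat) \<Rightarrow> (nat \<Rightarrow> nat) \<Rightarrow> bool" where
  "lex_less u v \<longleftrightarrow> (\<exists>n. (\<forall>k<n. u k = v k) \<and> u n < v n)"

definition represents_valid_perm :: "(nat \<Rightarrow> nat) \<Rightarrow> (nat \<Rightarrow> real) \<Rightarrow> bool" where
  "represents_valid_perm u a \<longleftrightarrow>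
     inj a \<and> (\<forall>i j. a i < a j \<longleftrightarrow> lex_less (shift i u) (shift j u))"

definition canonical :: "(nat \<Rightarrow> real) \<Rightarrow> bool" where
  "canonical a \<longleftrightarrow> inj a \<and> (\<forall>i. 0 \<le> a i \<and> a i \<le> 1) \<and>
     (\<forall>t\<in>{0..1}. \<forall>\<epsilon>>0. \<exists>N. \<forall>n\<ge>N. \<forall>j.
        \<bar>real (card {k. k < n \<and> a (j + k) < t}) / real n - t\<bar> < \<epsilon>)"

definition ergodic_valid_perm :: "(nat \<Rightarrow> nat) \<Rightarrow> bool" where
  "ergodic_valid_perm u \<longleftrightarrow> (\<exists>a. canonical a \<and> represents_valid_perm u a)"

text \<open>a_tm: fixed point starting with 1/2 of the morphism
  x \<mapsto> (x/2+1/4, x/2+3/4) for x \<le> 1/2, x \<mapsto> (x/2+1/4, x/2-1/4) for x > 1/2,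
  i.e. a(0)=1/2, a(2i) = first component of image of a(i), a(2i+1) = second component.\<close>
function atm :: "nat \<Rightarrow> real" where
  "atm n = (if n = 0 then 1/2 else
     (let x = atm (n div 2) in
        if even n then x/2 + 1/4
        else if x \<le> 1/2 then x/2 + 3/4 else x/2 - 1/4))"
  by auto
termination by (relation "measure id") auto

declare atm.simps[simp del]

end

theory Submission
  imports Defs
begin


lemma tm0: "tm 0 = 0" by (subst tm.simps) auto
lemma tm_even: "tm (2*n) = tm n"
  by (subst tm.simps) (auto simp: tm0)
lemma tm_odd: "tm (2*n+1) = 1 - tm n"
  by (subst tm.simps) auto
lemma tm_le1: "tm n \<le> 1"
proof (induction n rule: less_induct)
  case (less n) then show ?case by (subst tm.simps) auto
qed
lemma tm_01: "tm n = 0 \<or> tm n = 1"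
  using tm_le1[of n] by auto

lemma tm_no3: "\<not> (tm n = tm (n+1) \<and> tm (n+1) = tm (n+2))"
proof
  assume h: "tm n = tm (n+1) \<and> tm (n+1) = tm (n+2)"
  obtain k where "n = 2*k \<or> n = 2*k+1" by (cases "even n") (auto elim!: evenE oddE, presburger)
  then show False
  proof
    assume "n = 2*k" then show False using h tm_even[of k] tm_odd[of k] tm_01[of k] by auto
  next
    assume n: "n = 2*k+1"
    have "n + 1 = 2*(k+1)" "n+2 = 2*(k+1)+1" using n by auto
    then show False using h tm_even[of "k+1"] tm_odd[of "k+1"] tm_01[of "k+1"] by auto
  qed
qed

lemma atm_even: "atm (2*n) = atm n / 2 + 1/4"
  by (subst atm.simps) (auto simp: Let_def atm.simps[of 0])
lemma atm_odd: "atm (2*n+1) = (if atm n \<le> 1/2 then atm n / 2 + 3/4 else atm n / 2 - 1/4)"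
  by (subst atm.simps) (auto simp: Let_def)

lemma atm0: "atm 0 = 1/2" by (subst atm.simps) auto
lemma atm1: "atm 1 = 1" using atm_odd[of 0] atm0 by simp

lemma parity_cases: fixes n :: nat obtains k where "n = 2*k" | k where "n = 2*k+1"
  by (cases "even n") (auto elim!: evenE oddE)

lemma atm_range: "0 < atm n \<and> atm n \<le> 1"
proof (induction n rule: less_induct)
  case (less n)
  show ?case
  proof (cases "n = 0")
    case True then show ?thesis by (simp add: atm0)
  next
    case False
    obtain k where "n = 2*k \<or> n = 2*k+1" by (rule parity_cases[of n]) auto
    moreover have "k < n" using False calculation by auto
    ultimately show ?thesis using less[of k] atm_even[of k] atm_odd[of k] by auto
  qed
qed

lemma atm_tm: "atm n \<le> 1/2 \<longleftrightarrow> tm n = 0"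
proof (induction n rule: less_induct)
  case (less n)
  show ?case
  proof (cases "n = 0")
    case True then show ?thesis by (simp add: atm0 tm.simps[of 0])
  next
    case False
    obtain k where k: "n = 2*k \<or> n = 2*k+1" by (rule parity_cases[of n]) auto
    moreover have "k < n" using False calculation by auto
    ultimately show ?thesis using less[of k] atm_even[of k] atm_odd[of k] tm_even[of k] tm_odd[of k]
        tm_01[of k] atm_range[of k] by auto
  qed
qed

lemma atm_inj_aux: "atm i = atm j \<Longrightarrow> i = j"
proof (induction "i+j" arbitrary: i j rule: less_induct)
  case less
  show ?case
  proof (cases "i = j")
    case True then show ?thesis .
  next
    case False
    obtain n where n: "i = 2*n \<or> i = 2*n+1" by (rule parity_cases[of i]) auto
    obtain m where m: "j = 2*m \<or> j = 2*m+1" by (rule parity_cases[of j]) auto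
    have r: "0 < atm n" "atm n \<le> 1" "0 < atm m" "atm m \<le> 1" using atm_range by auto
    have nm: "n + m < i + j" using n m False by auto
    have "atm n = atm m \<Longrightarrow> n = m" using less(1)[OF nm] by auto
    then show ?thesis using n m less(2) atm_even[of n] atm_even[of m] atm_odd[of n] atm_odd[of m] r
      by (auto split: if_splits)
  qed
qed

lemma inj_atm: "inj atm" using atm_inj_aux by (auto simp: inj_def)



lemma lex_irrefl: "\<not> lex_less u u" by (auto simp: lex_less_def)

lemma lex_asym: assumes "lex_less u v" shows "\<not> lex_less v u"
proof
  assume "lex_less v u"
  then obtain m where m: "\<forall>k<m. v k = u k" "v m < u m" by (auto simp: lex_less_def)
  obtain n where n: "\<forall>k<n. u k = v k" "u n < v n" using assms by (auto simp: lex_less_def)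
  show False
  proof (cases m n rule: linorder_cases)
    case less then show ?thesis using m n by force
  next
    case equal then show ?thesis using m n by auto
  next
    case greater then show ?thesis using m n by force
  qed
qed

definition mu :: "(nat \<Rightarrow> nat) \<Rightarrow> nat \<Rightarrow> nat" where
  "mu x k = (if even k then x (k div 2) else 1 - x (k div 2))"

lemma mu_even[simp]: "mu x (2*l) = x l" by (simp add: mu_def)
lemma mu_odd[simp]: "mu x (2*l+1) = 1 - x l" by (simp add: mu_def)
lemma mu_Suc[simp]: "mu x (Suc (2*l)) = 1 - x l" by (simp add: mu_def)

lemma shift_even: "shift (2*n) tm = mu (shift n tm)"
proof
  fix k show "shift (2*n) tm k = mu (shift n tm) k"
  proof (cases k rule: parity_cases)
    case (1 l)
    have "2*n+k = 2*(n+l)" using 1 by auto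
    then have "tm (2*n+k) = tm (n+l)" using tm_even by metis
    moreover have "mu (shift n tm) k = tm (n+l)" using 1 by (simp add: shift_def)
    ultimately show ?thesis by (simp add: shift_def)
  next
    case (2 l)
    have "2*n+k = 2*(n+l)+1" using 2 by auto
    then have "tm (2*n+k) = 1 - tm (n+l)" using tm_odd by metis
    moreover have "mu (shift n tm) k = 1 - tm (n+l)" using 2 by (simp add: shift_def)
    ultimately show ?thesis by (simp add: shift_def)
  qed
qed

lemma shift_odd: "shift (2*n+1) tm = (\<lambda>k. mu (shift n tm) (k+1))"
proof
  fix k show "shift (2*n+1) tm k = mu (shift n tm) (k+1)"
  proof (cases k rule: parity_cases)
    case (1 l)
    have "2*n+1+k = 2*(n+l)+1" "k+1 = 2*l+1" using 1 by auto
    then have "tm (2*n+1+k) = 1 - tm (n+l)" "mu (shift n tm) (k+1) = 1 - tm (n+l)"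
      using tm_odd by (metis, simp add: shift_def)
    then show ?thesis by (simp add: shift_def)
  next
    case (2 l)
    have "2*n+1+k = 2*(n+l+1)" "k+1 = 2*(l+1)" using 2 by auto
    then have "tm (2*n+1+k) = tm (n+l+1)" "mu (shift n tm) (k+1) = tm (n+(l+1))"
      using tm_even by (metis, simp add: shift_def mu_def)
    then show ?thesis by (simp add: shift_def)
  qed
qed

lemma lex_mu:
  assumes "\<And>k. x k \<le> 1" "\<And>k. y k \<le> 1"
  shows "lex_less (mu x) (mu y) \<longleftrightarrow> lex_less x y"
proof
  assume "lex_less x y"
  then obtain n where n: "\<forall>k<n. x k = y k" "x n < y n" by (auto simp: lex_less_def)
  have "\<forall>k<2*n. mu x k = mu y k"
  proof (intro allI impI)
    fix k assume "k < 2*n"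
    then show "mu x k = mu y k" using n by (cases k rule: parity_cases) auto
  qed
  then show "lex_less (mu x) (mu y)" using n unfolding lex_less_def
    by (intro exI[of _ "2*n"]) auto
next
  assume "lex_less (mu x) (mu y)"
  then obtain n where n: "\<forall>k<n. mu x k = mu y k" "mu x n < mu y n" by (auto simp: lex_less_def)
  show "lex_less x y"
  proof (cases n rule: parity_cases)
    case (1 l)
    have "\<forall>k<l. x k = y k"
    proof (intro allI impI)
      fix k assume "k < l" then have "2*k < n" using 1 by auto
      then show "x k = y k" using n(1) by force
    qed
    then show ?thesis using n 1 unfolding lex_less_def by auto
  next
    case (2 l)
    have "2*l < n" using 2 by auto
    then have "x l = y l" using n(1) by force
    then show ?thesis using n 2 by auto
  qed
qed

lemma lex_mu1:
  assumes "\<And>k. x k \<le> 1" "\<And>k. y k \<le> 1"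
  shows "lex_less (\<lambda>k. mu x (k+1)) (\<lambda>k. mu y (k+1)) \<longleftrightarrow>
           (y 0 < x 0 \<or> (x 0 = y 0 \<and> lex_less x y))"
proof
  assume "y 0 < x 0 \<or> (x 0 = y 0 \<and> lex_less x y)"
  then show "lex_less (\<lambda>k. mu x (k+1)) (\<lambda>k. mu y (k+1))"
  proof
    assume "y 0 < x 0"
    then have "mu x 1 < mu y 1" using mu_odd[of x 0] mu_odd[of y 0] assms[of 0] by simp
    then show ?thesis unfolding lex_less_def by (intro exI[of _ 0]) auto
  next
    assume h: "x 0 = y 0 \<and> lex_less x y"
    then obtain n where n: "\<forall>k<n. x k = y k" "x n < y n" by (auto simp: lex_less_def)
    have "n \<noteq> 0" using h n by (metis less_irrefl)
    have "\<forall>k<2*n-1. mu x (k+1) = mu y (k+1)"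
    proof (intro allI impI)
      fix k assume k: "k < 2*n-1"
      show "mu x (k+1) = mu y (k+1)"
      proof (cases "k+1" rule: parity_cases)
        case (1 ka) then have "ka < n" using k by auto
        then show ?thesis using n(1) 1 by (metis mu_even)
      next
        case (2 ka) then have "ka < n" using k by auto
        then show ?thesis using n(1) 2 by (metis mu_odd)
      qed
    qed
    moreover have "mu x (2*n-1+1) < mu y (2*n-1+1)" using n \<open>n\<noteq>0\<close> by simp
    ultimately show ?thesis unfolding lex_less_def by blast
  qed
next
  assume "lex_less (\<lambda>k. mu x (k+1)) (\<lambda>k. mu y (k+1))"
  then obtain n where n: "\<forall>k<n. mu x (k+1) = mu y (k+1)" "mu x (n+1) < mu y (n+1)"
    by (auto simp: lex_less_def)
  show "y 0 < x 0 \<or> (x 0 = y 0 \<and> lex_less x y)"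
  proof (cases "n = 0")
    case True
    then show ?thesis using n mu_odd[of x 0] mu_odd[of y 0] assms[of 0] by (simp, arith)
  next
    case False
    have x0: "x 0 = y 0"
    proof -
      have "mu x 1 = mu y 1" using n(1) False by force
      then show ?thesis using mu_odd[of x 0] mu_odd[of y 0] assms[of 0] assms(2)[of 0] by simp
    qed
    show ?thesis
    proof (cases "n+1" rule: parity_cases)
      case (1 l)
      have "\<forall>k<l. x k = y k"
      proof (intro allI impI)
        fix k assume "k < l"
        show "x k = y k"
        proof (cases k)
          case 0 then show ?thesis using x0 by simp
        next
          case (Suc k')
          then have "2*k - 1 < n" "2*k-1+1 = 2*k" using 1 \<open>k<l\<close> by auto
          then show ?thesis using n(1) by (metis mu_even)
        qed
      qed
      then show ?thesis using x0 n(2) 1 unfolding lex_less_def by auto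
    next
      case (2 l)
      then have "2*l - 1 < n" "2*l-1+1 = 2*l" using False by auto
      then have "mu x (2*l) = mu y (2*l)" using n(1) by metis
      then have "x l = y l" by simp
      then show ?thesis using n(2) 2 by simp
    qed
  qed
qed



lemma lex_wit: "(\<And>k. k < n \<Longrightarrow> u k = v k) \<Longrightarrow> u n < v n \<Longrightarrow> lex_less u v"
  unfolding lex_less_def by blast

lemma shift_tm_le1: "shift n tm k \<le> 1" unfolding shift_def by (rule tm_le1)

lemma tm_vals:
  "tm (2*n) = tm n" "tm (2*n+1) = 1 - tm n" "tm (2*n+2) = tm (n+1)" "tm (2*n+3) = 1 - tm (n+1)"
  "tm (2*n+4) = tm (n+2)"
proof -
  show "tm (2*n) = tm n" "tm (2*n+1) = 1 - tm n" by (rule tm_even, rule tm_odd)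
  have "2*n+2 = 2*(n+1)" "2*n+3 = 2*(n+1)+1" "2*n+4 = 2*(n+2)" by auto
  then show "tm (2*n+2) = tm (n+1)" "tm (2*n+3) = 1 - tm (n+1)" "tm (2*n+4) = tm (n+2)"
    by (metis tm_even, metis tm_odd, metis tm_even)
qed

lemma small3: "k < (3::nat) \<Longrightarrow> k = 0 \<or> k = 1 \<or> k = 2" by auto
lemma small2: "k < (2::nat) \<Longrightarrow> k = 0 \<or> k = 1" by auto

lemma mixed0:
  assumes "tm m = 0"
  shows "lex_less (shift (2*n) tm) (shift (2*m+1) tm)"
proof -
  define U where "U = shift (2*n) tm"
  define V where "V = shift (2*m+1) tm"
  have e: "2*n+0 = 2*n" "2*m+1+0 = 2*m+1" "2*m+1+1 = 2*m+2" "2*m+1+2 = 2*m+3"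
     "2*m+1+3 = 2*m+4" by simp_all
  have u: "U 0 = tm n" "U 1 = 1 - tm n" "U 2 = tm (n+1)" "U 3 = 1 - tm (n+1)"
    unfolding U_def by (simp_all only: shift_def e tm_vals)
  have v: "V 0 = 1" "V 1 = tm (m+1)" "V 2 = 1 - tm (m+1)" "V 3 = tm (m+2)"
    unfolding V_def by (simp_all only: shift_def e tm_vals assms diff_zero)
  have no3: "\<not> (tm m = tm (m+1) \<and> tm (m+1) = tm (m+2))" by (rule tm_no3)
  have no3': "\<not> (tm n = tm (n+1) \<and> tm (n+1) = tm (n+2))" by (rule tm_no3)
  consider "tm n = 0" | "tm n = 1 \<and> tm (m+1) = 1" | "tm n = 1 \<and> tm (m+1) = 0 \<and> tm (n+1) = 0"
    | "tm n = 1 \<and> tm (m+1) = 0 \<and> tm (n+1) = 1"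
    using tm_01[of n] tm_01[of "m+1"] tm_01[of "n+1"] by fastforce
  then have "lex_less U V"
  proof cases
    case 1 then show ?thesis by (intro lex_wit[of 0]) (auto simp: u v)
  next
    case 2 then show ?thesis by (intro lex_wit[of 1]) (auto simp: u v u[simplified] v[simplified])
  next
    case 3 then show ?thesis by (intro lex_wit[of 2]) (auto simp: u v u[simplified] v[simplified] dest!: small2)
  next
    case 4
    then have "tm (m+2) = 1" using no3 assms tm_01[of "m+2"] by auto
    then show ?thesis using 4 by (intro lex_wit[of 3]) (auto simp: u v u[simplified] v[simplified] dest!: small3)
  qed
  then show ?thesis unfolding U_def V_def .
qed

lemma mixed1:
  assumes "tm m = 1"
  shows "lex_less (shift (2*m+1) tm) (shift (2*n) tm)"
proof -
  define U where "U = shift (2*n) tm"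
  define V where "V = shift (2*m+1) tm"
  have e: "2*n+0 = 2*n" "2*m+1+0 = 2*m+1" "2*m+1+1 = 2*m+2" "2*m+1+2 = 2*m+3"
     "2*m+1+3 = 2*m+4" by simp_all
  have u: "U 0 = tm n" "U 1 = 1 - tm n" "U 2 = tm (n+1)" "U 3 = 1 - tm (n+1)"
    unfolding U_def by (simp_all only: shift_def e tm_vals)
  have v: "V 0 = 0" "V 1 = tm (m+1)" "V 2 = 1 - tm (m+1)" "V 3 = tm (m+2)"
    unfolding V_def by (simp_all only: shift_def e tm_vals assms diff_zero)
  have no3: "\<not> (tm m = tm (m+1) \<and> tm (m+1) = tm (m+2))" by (rule tm_no3)
  have no3': "\<not> (tm n = tm (n+1) \<and> tm (n+1) = tm (n+2))" by (rule tm_no3)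
  consider "tm n = 1" | "tm n = 0 \<and> tm (m+1) = 0" | "tm n = 0 \<and> tm (m+1) = 1 \<and> tm (n+1) = 1"
    | "tm n = 0 \<and> tm (m+1) = 1 \<and> tm (n+1) = 0"
    using tm_01[of n] tm_01[of "m+1"] tm_01[of "n+1"] by fastforce
  then have "lex_less V U"
  proof cases
    case 1 then show ?thesis by (intro lex_wit[of 0]) (auto simp: u v)
  next
    case 2 then show ?thesis by (intro lex_wit[of 1]) (auto simp: u v u[simplified] v[simplified])
  next
    case 3 then show ?thesis by (intro lex_wit[of 2]) (auto simp: u v u[simplified] v[simplified] dest!: small2)
  next
    case 4
    then have "tm (m+2) = 0" using no3 assms tm_01[of "m+2"] by auto
    then show ?thesis using 4 by (intro lex_wit[of 3]) (auto simp: u v u[simplified] v[simplified] dest!: small3)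
  qed
  then show ?thesis unfolding U_def V_def .
qed


lemma atm_half_range: "1/4 < atm (2*n) \<and> atm (2*n) \<le> 3/4"
  using atm_even[of n] atm_range[of n] by auto

lemma atm_odd_range: "(tm n = 0 \<longrightarrow> 3/4 < atm (2*n+1)) \<and> (tm n = 1 \<longrightarrow> atm (2*n+1) \<le> 1/4)"
  using atm_odd[of n] atm_range[of n] atm_tm[of n] by auto

theorem atm_represents: "atm i < atm j \<longleftrightarrow> lex_less (shift i tm) (shift j tm)"
proof (induction "i+j" arbitrary: i j rule: less_induct)
  case less
  show ?case
  proof (cases "i = j")
    case True then show ?thesis by (simp add: lex_irrefl)
  next
    case False
    have b: "\<And>n k. shift n tm k \<le> 1" by (rule shift_tm_le1)
    obtain n where n: "i = 2*n \<or> i = 2*n+1" by (rule parity_cases[of i]) auto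
    obtain m where m: "j = 2*m \<or> j = 2*m+1" by (rule parity_cases[of j]) auto
    have nm: "n + m < i + j" using n m False by auto
    have IH: "atm n < atm m \<longleftrightarrow> lex_less (shift n tm) (shift m tm)" using less(1)[OF nm] by simp
    have s0: "shift n tm 0 = tm n" "shift m tm 0 = tm m" by (simp_all add: shift_def)
    consider "i = 2*n" "j = 2*m" | "i = 2*n+1" "j = 2*m+1" | "i = 2*n" "j = 2*m+1" | "i = 2*n+1" "j = 2*m"
      using n m by blast
    then show ?thesis
    proof cases
      case 1
      then show ?thesis using IH lex_mu[of "shift n tm" "shift m tm", OF b b] by (simp add: shift_even atm_even)
    next
      case 2
      have L: "lex_less (shift i tm) (shift j tm) \<longleftrightarrow> (tm m < tm n \<or> (tm n = tm m \<and> lex_less (shift n tm) (shift m tm)))"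
        unfolding 2 shift_odd lex_mu1[of "shift n tm" "shift m tm", OF b b] s0 ..
      show ?thesis unfolding L using IH 2 atm_odd[of n] atm_odd[of m] atm_tm[of n] atm_tm[of m]
        tm_01[of n] tm_01[of m] atm_range[of n] atm_range[of m] by auto
    next
      case 3
      show ?thesis
      proof (cases "tm m = 0")
        case True
        then show ?thesis using mixed0[OF True, of n] 3 atm_half_range[of n] atm_odd_range[of m] by auto
      next
        case False
        then have "tm m = 1" using tm_01[of m] by auto
        then show ?thesis using mixed1[of m n] lex_asym 3 atm_half_range[of n] atm_odd_range[of m] by fastforce
      qed
    next
      case 4
      show ?thesis
      proof (cases "tm n = 0")
        case True
        then show ?thesis using mixed0[OF True, of m] lex_asym 4 atm_half_range[of m] atm_odd_range[of n] by fastforce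
      next
        case False
        then have "tm n = 1" using tm_01[of n] by auto
        then show ?thesis using mixed1[of n m] 4 atm_half_range[of m] atm_odd_range[of n] by auto
      qed
    qed
  qed
qed



lemma block_base: "\<exists>s. 0 < s \<and> s \<le> 1/2 \<and> (\<forall>r<2. \<exists>k<2. atm (2*q + r) = s + real k / 2)"
proof (cases "atm q \<le> 1/2")
  case True
  have "atm (2*q+1) = atm (2*q) + 1/2" using True atm_odd[of q] atm_even[of q] by simp
  then show ?thesis using True atm_range[of q] atm_even[of q]
    by (intro exI[of _ "atm q / 2 + 1/4"]) (auto dest!: small2 intro: exI[of _ 0] exI[of _ 1])
next
  case False
  have "atm (2*q) = atm (2*q+1) + 1/2" "atm (2*q+1) = atm q / 2 - 1/4"
    using False atm_odd[of q] atm_even[of q] by simp_all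
  then show ?thesis using False atm_range[of q]
    by (intro exI[of _ "atm q / 2 - 1/4"]) (auto dest!: small2 intro: exI[of _ 0] exI[of _ 1])
qed

lemma block_step:
  fixes h :: nat
  assumes h: "h > 0"
    and IH: "0 < s" "s \<le> 1/(2*h)" "\<forall>r<2*h. \<exists>k<2*h. atm (2*h*q + r) = s + real k / (2*h)"
  shows "\<forall>r<4*h. \<exists>k<4*h. atm (4*h*q + r) = s/2 + real k / (4*h)"
proof (intro allI impI)
  fix r' assume r': "r' < 4*h"
  define r where "r = r' div 2"
  define e where "e = r' mod 2"
  have rr: "4*h*q + r' = 2*(2*h*q + r) + e" "r < 2*h" "e = 0 \<or> e = 1"
    using r' unfolding r_def e_def by auto
  obtain k where k: "k < 2*h" "atm (2*h*q + r) = s + real k / (2*h)" using IH(3) rr(2) by blast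
  define v where "v = atm (2*h*q + r)"
  have hpos: "real h > 0" using h by simp
  show "\<exists>k<4*h. atm (4*h*q + r') = s/2 + real k / (4*h)"
  proof (cases "e = 0")
    case True
    have "atm (4*h*q + r') = v/2 + 1/4" unfolding rr(1) True add_0_right v_def by (rule atm_even)
    also have "\<dots> = s/2 + real (k+h) / (4*h)" unfolding v_def k(2) using hpos
      by (simp add: field_simps)
    finally show ?thesis using k(1) by (intro exI[of _ "k+h"]) auto
  next
    case False
    then have e1: "e = 1" using rr(3) by auto
    show ?thesis
    proof (cases "v \<le> 1/2")
      case True
      have "real k / (2*h) < 1/2" using True IH(1) unfolding v_def k(2) by linarith
      then have kh: "k < h" using hpos by (simp add: field_simps)
      have "atm (4*h*q + r') = v/2 + 3/4" unfolding rr(1) e1 using True atm_odd[of "2*h*q+r"]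
        unfolding v_def by simp
      also have "\<dots> = s/2 + real (k+3*h) / (4*h)" unfolding v_def k(2) using hpos
        by (simp add: field_simps)
      finally show ?thesis using kh by (intro exI[of _ "k+3*h"]) auto
    next
      case False
      have "real k / (2*h) > 1/2 - 1/(2*h)" using False IH(2) unfolding v_def k(2) by linarith
      then have "2*real h * (real k/(2*h)) > 2*real h*(1/2 - 1/(2*h))" using hpos
        by (intro mult_strict_left_mono) auto
      moreover have "2*real h * (real k/(2*h)) = real k" using hpos by simp
      moreover have "2*real h * (1/2 - 1/(2*h)) = real h - 1" using hpos by (simp add: field_simps)
      ultimately have "real k > real h - 1" by simp
      then have kh: "h \<le> k" by linarith
      have "atm (4*h*q + r') = v/2 - 1/4" unfolding rr(1) e1 using False atm_odd[of "2*h*q+r"]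
        unfolding v_def by simp
      also have "\<dots> = s/2 + real (k-h) / (4*h)" unfolding v_def k(2) using hpos kh
        by (simp add: field_simps of_nat_diff)
      finally show ?thesis using kh k(1) by (intro exI[of _ "k-h"]) auto
    qed
  qed
qed

lemma block:
  "\<exists>s. 0 < s \<and> s \<le> 1/(2*2^m) \<and> (\<forall>r<2*2^m. \<exists>k<2*2^m. atm (2*2^m*q + r) = s + real k / (2*2^m))"
proof (induction m)
  case 0 then show ?case using block_base[of q] by simp
next
  case (Suc m)
  then obtain s where s: "0 < s" "s \<le> 1/(2*2^m)" "\<forall>r<2*2^m. \<exists>k<2*2^m. atm (2*2^m*q + r) = s + real k / (2*2^m)"
    by blast
  have h: "(2::nat)^m > 0" by simp
  have "\<forall>r<4*2^m. \<exists>k<4*2^m. atm (4*2^m*q + r) = s/2 + real k / (4*2^m)"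
    using block_step[OF h, of s q] s by simp
  moreover have "s/2 \<le> 1/(2*2^Suc m)" using s(2) by simp
  ultimately show ?case using s(1) by (intro exI[of _ "s/2"]) (simp add: mult.assoc)
qed



lemma grid_count:
  fixes N :: nat and s t :: real
  assumes N: "N > 0" and s: "0 < s" "s \<le> 1/N" and t: "0 \<le> t" "t \<le> 1"
  shows "\<bar>real (card {k. k < N \<and> s + real k / N < t}) - N*t\<bar> \<le> 2"
proof -
  have Np: "real N > 0" using N by simp
  let ?S = "{k. k < N \<and> s + real k / N < t}"
  have sub1: "?S \<subseteq> {..< nat \<lceil>N*t\<rceil>}"
  proof
    fix k assume "k \<in> ?S"
    then have "real k / N < t" using s by auto
    then have "real k < N*t" using Np by (simp add: field_simps)
    then have "int k < \<lceil>N*t\<rceil>" by (simp add: less_ceiling_iff)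
    then show "k \<in> {..< nat \<lceil>N*t\<rceil>}" by auto
  qed
  have c1: "card ?S \<le> nat \<lceil>N*t\<rceil>" using card_mono[OF _ sub1] by simp
  have c1': "real (nat \<lceil>N*t\<rceil>) \<le> N*t + 1"
  proof -
    have "0 \<le> N*t" using t Np by simp
    then have "0 \<le> \<lceil>N*t\<rceil>" by simp
    then have "real (nat \<lceil>N*t\<rceil>) = real_of_int \<lceil>N*t\<rceil>" by simp
    then show ?thesis using of_int_ceiling_le_add_one[of "N*t"] by linarith
  qed
  have sub2: "{..< nat \<lfloor>N*t\<rfloor> - 1} \<subseteq> ?S"
  proof
    fix k assume "k \<in> {..< nat \<lfloor>N*t\<rfloor> - 1}"
    then have "int (k+1) < \<lfloor>N*t\<rfloor>" by auto
    then have "real_of_int (int (k+1)) < real_of_int \<lfloor>N*t\<rfloor>" by (simp only: of_int_less_iff)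
    then have k1: "real k + 1 < N*t" using of_int_floor_le[of "N*t"] by (simp; linarith)
    have "N*t \<le> N" using t Np by simp
    then have "k < N" using k1 by linarith
    moreover have "real k / N < t - 1/N" using k1 Np by (simp add: field_simps)
    ultimately show "k \<in> ?S" using s by auto
  qed
  have c2: "nat \<lfloor>N*t\<rfloor> - 1 \<le> card ?S" using card_mono[OF _ sub2] by simp
  have c2': "real (nat \<lfloor>N*t\<rfloor> - 1) \<ge> N*t - 2"
  proof -
    have "real_of_int \<lfloor>N*t\<rfloor> > N*t - 1" by simp
    moreover have "\<lfloor>N*t\<rfloor> \<ge> 0" using t Np by simp
    ultimately show ?thesis by linarith
  qed
  show ?thesis using c1 c1' c2 c2' by (smt (verit) of_nat_mono)
qed



lemma block_count:
  fixes t :: real and m :: nat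
  assumes t: "0 \<le> t" "t \<le> 1"
  defines "N \<equiv> 2*2^m :: nat"
  shows "\<bar>real (card {r. r < N \<and> atm (N*q + r) < t}) - N*t\<bar> \<le> 2"
proof -
  obtain s where s: "0 < s" "s \<le> 1/N" "\<forall>r<N. \<exists>k<N. atm (N*q + r) = s + real k / N"
    using block[of m q] unfolding N_def by auto
  have Np: "N > 0" unfolding N_def by simp
  let ?f = "\<lambda>r. atm (N*q + r)" and ?g = "\<lambda>k. s + real k / N"
  have injf: "inj_on ?f {..<N}" by (auto simp: inj_on_def dest: atm_inj_aux)
  have injg: "inj_on ?g {..<N}" using Np by (auto simp: inj_on_def)
  have sub: "?f ` {..<N} \<subseteq> ?g ` {..<N}" using s(3) by auto
  have eq: "?f ` {..<N} = ?g ` {..<N}"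
    by (rule card_subset_eq) (use sub card_image[OF injf] card_image[OF injg] in auto)
  have "card {r. r < N \<and> ?f r < t} = card (?f ` {r. r < N \<and> ?f r < t})"
    by (rule card_image[symmetric]) (rule inj_on_subset[OF injf], auto)
  also have "?f ` {r. r < N \<and> ?f r < t} = {v \<in> ?f ` {..<N}. v < t}" by auto
  also have "\<dots> = {v \<in> ?g ` {..<N}. v < t}" by (simp only: eq)
  also have "\<dots> = ?g ` {k. k < N \<and> ?g k < t}" by auto
  also have "card \<dots> = card {k. k < N \<and> ?g k < t}"
    by (rule card_image) (rule inj_on_subset[OF injg], auto)
  finally have "card {r. r < N \<and> ?f r < t} = card {k. k < N \<and> s + real k / N < t}" .
  then show ?thesis using grid_count[OF Np s(1) s(2) t] by simp
qed

definition Gc :: "real \<Rightarrow> nat \<Rightarrow> nat \<Rightarrow> nat" where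
  "Gc t x y = card {i. x \<le> i \<and> i < y \<and> atm i < t}"

lemma Gc_add: "x \<le> y \<Longrightarrow> y \<le> z \<Longrightarrow> Gc t x z = Gc t x y + Gc t y z"
proof -
  assume a: "x \<le> y" "y \<le> z"
  have "{i. x \<le> i \<and> i < z \<and> atm i < t} = {i. x \<le> i \<and> i < y \<and> atm i < t} \<union> {i. y \<le> i \<and> i < z \<and> atm i < t}"
    using a by auto
  moreover have "card ({i. x \<le> i \<and> i < y \<and> atm i < t} \<union> {i. y \<le> i \<and> i < z \<and> atm i < t})
     = card {i. x \<le> i \<and> i < y \<and> atm i < t} + card {i. y \<le> i \<and> i < z \<and> atm i < t}"
    by (rule card_Un_disjoint) auto
  ultimately show ?thesis unfolding Gc_def by simp
qed

lemma Gc_le: "Gc t x y \<le> y - x"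
proof -
  have "{i. x \<le> i \<and> i < y \<and> atm i < t} \<subseteq> {x..<y}" by auto
  then show ?thesis unfolding Gc_def using card_mono[of "{x..<y}"] by fastforce
qed

lemma Gc_mono: "x' \<le> x \<Longrightarrow> y \<le> y' \<Longrightarrow> Gc t x y \<le> Gc t x' y'"
  unfolding Gc_def by (rule card_mono) auto

lemma Gc_block: "Gc t (N*q) (N*q + N) = card {r. r < N \<and> atm (N*q + r) < t}"
proof -
  have "{i. N*q \<le> i \<and> i < N*q + N \<and> atm i < t} = (\<lambda>r. N*q + r) ` {r. r < N \<and> atm (N*q + r) < t}"
  proof
    show "{i. N*q \<le> i \<and> i < N*q + N \<and> atm i < t} \<subseteq> (\<lambda>r. N*q + r) ` {r. r < N \<and> atm (N*q + r) < t}"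
    proof
      fix i assume "i \<in> {i. N*q \<le> i \<and> i < N*q + N \<and> atm i < t}"
      then show "i \<in> (\<lambda>r. N*q + r) ` {r. r < N \<and> atm (N*q + r) < t}"
        by (auto intro!: image_eqI[of _ _ "i - N*q"])
    qed
  qed auto
  then show ?thesis unfolding Gc_def by (simp add: card_image)
qed

lemma Gc_blocks:
  fixes t :: real and m :: nat
  assumes t: "0 \<le> t" "t \<le> 1"
  defines "N \<equiv> 2*2^m :: nat"
  shows "\<bar>real (Gc t (N*q) (N*(q+l))) - l*N*t\<bar> \<le> 2*l"
proof (induction l)
  case 0 then show ?case by (simp add: Gc_def)
next
  case (Suc l)
  have e: "N*(q+Suc l) = N*(q+l)+N" by simp
  have "Gc t (N*q) (N*(q+Suc l)) = Gc t (N*q) (N*(q+l)) + Gc t (N*(q+l)) (N*(q+l) + N)"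
    unfolding e by (rule Gc_add) auto
  moreover have "\<bar>real (Gc t (N*(q+l)) (N*(q+l) + N)) - N*t\<bar> \<le> 2"
    using block_count[OF t, of m "q+l"] Gc_block[of t N "q+l"] unfolding N_def by simp
  ultimately show ?case using Suc by (simp add: algebra_simps)
qed



lemma window:
  fixes t :: real and m :: nat
  assumes t: "0 \<le> t" "t \<le> 1" and xy: "x \<le> y"
  defines "N \<equiv> 2*2^m :: nat"
  shows "\<bar>real (Gc t x y) - real (y - x) * t\<bar> \<le> 2 * real (y - x) / N + 4 * N"
proof -
  have N2: "N \<ge> 2" unfolding N_def by simp
  then have Np: "real N > 0" by simp
  define a where "a = x div N"
  define b where "b = y div N"
  have "x = N*a + x mod N" "x mod N < N" unfolding a_def using N2 by simp_all
  then have ax: "N*a \<le> x" "x < N*a + N" by linarith+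
  have "y = N*b + y mod N" "y mod N < N" unfolding b_def using N2 by simp_all
  then have by': "N*b \<le> y" "y < N*b + N" by linarith+
  have ab: "a \<le> b" unfolding a_def b_def using xy by (simp add: div_le_mono)
  have rax: "real N * a \<le> x" "x < real N * a + N" using ax by (simp_all only: of_nat_mult[symmetric] of_nat_add[symmetric] of_nat_le_iff of_nat_less_iff)
  have rby: "real N * b \<le> y" "y < real N * b + N" using by' by (simp_all only: of_nat_mult[symmetric] of_nat_add[symmetric] of_nat_le_iff of_nat_less_iff)
  have dxy: "real (y - x) = real y - real x" using xy by simp
  define L where "L = b + 1 - a"
  have L: "N*(a + L) = N*(b+1)" "real L = real b + 1 - real a" unfolding L_def using ab by auto
  have "Gc t x y \<le> Gc t (N*a) (N*(a+L))" unfolding L(1) by (rule Gc_mono) (use ax by' in auto)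
  moreover have "\<bar>real (Gc t (N*a) (N*(a+L))) - L*N*t\<bar> \<le> 2*L" using Gc_blocks[OF t, of m a L] unfolding N_def by simp
  ultimately have up1: "real (Gc t x y) \<le> L*N*t + 2*L" by linarith
  have LN: "L*real N < real (y-x) + 2*N" unfolding L(2) dxy using rax rby by (simp add: algebra_simps)
  have "L*N*t \<le> (real (y-x) + 2*N)*t" using LN t by (intro mult_right_mono) auto
  also have "\<dots> \<le> real (y-x)*t + 2*N" using t Np by (simp add: algebra_simps)
  finally have up2: "L*N*t \<le> real (y-x)*t + 2*N" .
  have "L < real (y-x)/N + 2" using LN Np by (simp add: field_simps)
  then have up: "real (Gc t x y) \<le> real (y-x)*t + 2*real (y-x)/N + 4*N" using up1 up2 N2 by linarith
  have low: "real (Gc t x y) \<ge> real (y-x)*t - 2*real (y-x)/N - 4*N"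
  proof (cases "a + 1 \<le> b")
    case True
    define L' where "L' = b - (a+1)"
    have L': "N*(a+1+L') = N*b" "real L' = real b - real a - 1" unfolding L'_def using True by auto
    have "Gc t (N*(a+1)) (N*(a+1+L')) \<le> Gc t x y" unfolding L'(1) by (rule Gc_mono) (use ax by' in auto)
    moreover have "\<bar>real (Gc t (N*(a+1)) (N*(a+1+L'))) - L'*N*t\<bar> \<le> 2*L'" using Gc_blocks[OF t, of m "a+1" L'] unfolding N_def by simp
    ultimately have lo1: "real (Gc t x y) \<ge> L'*N*t - 2*L'" by linarith
    have LN1: "L'*real N > real (y-x) - 2*N" unfolding L'(2) dxy using rax rby by (simp add: algebra_simps)
    have LN2: "L'*real N \<le> real (y-x)" unfolding L'(2) dxy using rax rby by (simp add: algebra_simps)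
    have "(real (y-x) - 2*N)*t \<le> L'*N*t" using LN1 t by (intro mult_right_mono) auto
    moreover have "(real (y-x) - 2*N)*t \<ge> real (y-x)*t - 2*N" using t Np by (simp add: algebra_simps)
    moreover have "L' \<le> real (y-x)/N" using LN2 Np by (simp add: field_simps)
    moreover have "2*real (y-x)/N = 2*(real (y-x)/N)" by simp
    ultimately show ?thesis using lo1 by linarith
  next
    case False
    then have "b \<le> a" by simp
    then have "real b \<le> real a" by simp
    then have "real N * b \<le> real N * a" using Np by (intro mult_left_mono) auto
    then have "real (y-x) < N" unfolding dxy using rax rby by linarith
    moreover have "real (y-x)*t \<le> real (y-x)" using t by (intro mult_left_le) auto
    moreover have "2*real (y-x)/N = 2*(real (y-x)/N)" "real (y-x)/N \<ge> 0" by simp_all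
    ultimately show ?thesis by linarith
  qed
  show ?thesis using up low by (simp add: abs_le_iff)
qed



lemma Gc_shift: "card {k. k < n \<and> atm (x + k) < t} = Gc t x (x + n)"
proof -
  have "{i. x \<le> i \<and> i < x + n \<and> atm i < t} = (\<lambda>k. x + k) ` {k. k < n \<and> atm (x + k) < t}"
  proof
    show "{i. x \<le> i \<and> i < x + n \<and> atm i < t} \<subseteq> (\<lambda>k. x + k) ` {k. k < n \<and> atm (x + k) < t}"
    proof
      fix i assume "i \<in> {i. x \<le> i \<and> i < x + n \<and> atm i < t}"
      then show "i \<in> (\<lambda>k. x + k) ` {k. k < n \<and> atm (x + k) < t}"
        by (auto intro!: image_eqI[of _ _ "i - x"])
    qed
  qed auto
  then show ?thesis unfolding Gc_def by (simp add: card_image)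
qed

definition bseq :: "nat \<Rightarrow> real" where "bseq n = (if n = 0 then 0 else atm (n - 1))"

lemma count_b:
  fixes t :: real and m n j :: nat
  assumes t: "0 \<le> t" "t \<le> 1"
  defines "N \<equiv> 2*2^m :: nat"
  shows "\<bar>real (card {k. k < n \<and> bseq (j + k) < t}) - n*t\<bar> \<le> 2 * n / N + 4 * N + 2"
proof (cases j)
  case (Suc j')
  have "{k. k < n \<and> bseq (j + k) < t} = {k. k < n \<and> atm (j' + k) < t}" using Suc by (auto simp: bseq_def)
  then have "card {k. k < n \<and> bseq (j + k) < t} = Gc t j' (j' + n)" by (simp add: Gc_shift)
  moreover have "\<bar>real (Gc t j' (j'+n)) - real (j' + n - j') * t\<bar> \<le> 2 * real (j'+n-j') / N + 4 * N"
    using window[OF t, of j' "j'+n" m] unfolding N_def by simp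
  ultimately show ?thesis by simp
next
  case 0
  define S where "S = {k. k < n \<and> bseq k < t}"
  define c where "c = card {k. k < n - 1 \<and> atm k < t}"
  have S1: "S \<subseteq> insert 0 (Suc ` {k. k < n - 1 \<and> atm k < t})"
  proof
    fix k assume "k \<in> S"
    then show "k \<in> insert 0 (Suc ` {k. k < n - 1 \<and> atm k < t})"
      unfolding S_def bseq_def by (cases k) auto
  qed
  have S2: "Suc ` {k. k < n - 1 \<and> atm k < t} \<subseteq> S" unfolding S_def bseq_def by auto
  have "card S \<le> card (insert 0 (Suc ` {k. k < n - 1 \<and> atm k < t}))" using S1 by (intro card_mono) auto
  also have "\<dots> \<le> Suc c" unfolding c_def by (simp add: card_insert_if card_image)
  finally have u: "card S \<le> Suc c" .
  have "c \<le> card S" unfolding c_def using card_mono[OF _ S2] card_image[of Suc] by (simp add: S_def)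
  moreover have "c = Gc t 0 (n - 1)" unfolding c_def using Gc_shift[of "n-1" 0 t] by simp
  moreover have w: "\<bar>real (Gc t 0 (n-1)) - real (n - 1 - 0) * t\<bar> \<le> 2 * real (n-1-0) / N + 4 * N"
    using window[OF t, of 0 "n-1" m] unfolding N_def by simp
  moreover have "real (n - 1) \<ge> real n - 1" "real (n-1) \<le> real n" by auto
  moreover have "2 * real (n-1) / N \<le> 2 * n / N" by (intro divide_right_mono) auto
  moreover have "real (n-1) * t \<le> n * t" using t by (auto intro!: mult_right_mono)
  moreover have "real n * t \<le> real (n-1) * t + 1"
  proof -
    have "real n * t \<le> (real (n-1) + 1) * t" using t by (intro mult_right_mono) auto
    then show ?thesis using t by (simp add: algebra_simps)
  qed
  moreover have "real (card S) \<le> real c + 1" using u by simp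
  ultimately have "\<bar>real (card S) - n*t\<bar> \<le> 2 * n / N + 4 * N + 2"
    unfolding abs_le_iff by (simp only: diff_zero) linarith
  then show ?thesis using 0 S_def by simp
qed



lemma canonical_bseq: "canonical bseq"
  unfolding canonical_def
proof (intro conjI ballI allI impI)
  show "inj bseq"
  proof (rule injI)
    fix x y assume h: "bseq x = bseq y"
    show "x = y"
    proof (cases x; cases y)
      fix x' y' assume "x = Suc x'" "y = Suc y'" then show ?thesis using h atm_inj_aux by (simp add: bseq_def)
    qed (use h atm_range in \<open>auto simp: bseq_def dest: sym, metis less_irrefl, metis less_irrefl\<close>)
  qed
next
  fix i show "0 \<le> bseq i" "bseq i \<le> 1" using atm_range[of "i - 1"] by (auto simp: bseq_def)
next
  fix t :: real and \<epsilon> :: real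
  assume t: "t \<in> {0..1}" and e: "\<epsilon> > 0"
  then have t0: "0 \<le> t" "t \<le> 1" by auto
  obtain m where m: "8/\<epsilon> < (2::real)^m" using real_arch_pow[of 2 "8/\<epsilon>"] by auto
  define N :: nat where "N = 2*2^m"
  have Npos: "real N > 0" unfolding N_def by simp
  have m2: "2 / real N < \<epsilon>/4"
  proof -
    have "2 / real N = 1 / 2^m" unfolding N_def by simp
    also have "\<dots> < \<epsilon>/8" using m e by (simp add: field_simps)
    finally show ?thesis using e by simp
  qed
  define M where "M = nat \<lceil>(4*N+2) * 4 / \<epsilon>\<rceil> + 1"
  show "\<exists>M. \<forall>n\<ge>M. \<forall>j. \<bar>real (card {k. k < n \<and> bseq (j + k) < t}) / real n - t\<bar> < \<epsilon>"
  proof (intro exI[of _ M] allI impI)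
    fix n j assume n: "M \<le> n"
    have np: "real n > 0" using n unfolding M_def by simp
    have "real n > (4*N+2) * 4 / \<epsilon>"
    proof -
      have "real n \<ge> real (nat \<lceil>(4*N+2) * 4 / \<epsilon>\<rceil>) + 1" using n unfolding M_def by simp
      moreover have "real (nat \<lceil>(4*N+2) * 4 / \<epsilon>\<rceil>) \<ge> (4*N+2) * 4 / \<epsilon>" by (rule of_nat_ceiling)
      ultimately show ?thesis by linarith
    qed
    then have "(4*N+2) * 4 < real n * \<epsilon>" using e by (simp add: field_simps)
    then have q: "(4*N+2) / real n < \<epsilon>/4" using np by (simp add: field_simps)
    have c: "\<bar>real (card {k. k < n \<and> bseq (j + k) < t}) - n*t\<bar> \<le> 2 * n / N + 4 * N + 2"
      using count_b[OF t0, of n j m] unfolding N_def by simp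
    have "\<bar>real (card {k. k < n \<and> bseq (j + k) < t}) / real n - t\<bar>
        = \<bar>real (card {k. k < n \<and> bseq (j + k) < t}) - n*t\<bar> / real n"
      using np by (simp add: field_simps abs_divide[symmetric])
    also have "\<dots> \<le> (2 * n / N + 4 * N + 2) / real n" using c np by (intro divide_right_mono) auto
    also have "\<dots> = 2 / N + (4*N+2) / real n" using np by (simp add: field_simps)
    also have "\<dots> < \<epsilon>" using m2 q e by linarith
    finally show "\<bar>real (card {k. k < n \<and> bseq (j + k) < t}) / real n - t\<bar> < \<epsilon>" .
  qed
qed



lemma lex_plus1: "lex_less (\<lambda>k. f k + 1) (\<lambda>k. g k + 1) \<longleftrightarrow> lex_less f g"
  unfolding lex_less_def by simp

lemma lex_suc: "lex_less (\<lambda>k. Suc (f k)) (\<lambda>k. Suc (g k)) \<longleftrightarrow> lex_less f g"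
  unfolding lex_less_def by simp

lemma part1:
  defines "w1 \<equiv> (\<lambda>n::nat. if n = 0 then 0 else tm (n - 1) + 1)"
  shows "represents_valid_perm w1 bseq"
  unfolding represents_valid_perm_def
proof (intro conjI allI)
  show "inj bseq" using canonical_bseq unfolding canonical_def by simp
next
  have sh: "\<And>k. shift (Suc k) w1 = (\<lambda>p. shift k tm p + 1)" unfolding w1_def shift_def by auto
  have lt0: "\<And>l. lex_less (shift 0 w1) (shift (Suc l) w1)"
    by (rule lex_wit[of 0]) (auto simp: shift_def w1_def)
  fix i j
  show "bseq i < bseq j \<longleftrightarrow> lex_less (shift i w1) (shift j w1)"
  proof (cases i; cases j)
    assume "i = 0" "j = 0" then show ?thesis by (simp add: lex_irrefl)
  next
    fix l assume "i = 0" "j = Suc l" then show ?thesis using lt0[of l] atm_range[of l] by (simp add: bseq_def)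
  next
    fix k assume "i = Suc k" "j = 0" then show ?thesis using lt0[of k] lex_asym atm_range[of k]
      by (auto simp: bseq_def)
  next
    fix k l assume "i = Suc k" "j = Suc l" then show ?thesis
      using atm_represents[of k l] by (simp add: bseq_def sh lex_suc)
  qed
qed

lemma part2: "\<not> ergodic_valid_perm (\<lambda>n. if n = 0 then 2 else tm (n - 1))"
proof
  define v where "v = (\<lambda>n::nat. if n = 0 then 2 else tm (n - 1))"
  assume "ergodic_valid_perm (\<lambda>n. if n = 0 then 2 else tm (n - 1))"
  then obtain a where a: "canonical a" "represents_valid_perm v a" unfolding ergodic_valid_perm_def v_def by blast
  have ord: "\<And>i j. a i < a j \<longleftrightarrow> lex_less (shift i v) (shift j v)" using a(2) unfolding represents_valid_perm_def by blast
  have sh: "\<And>k. shift (Suc k) v = shift k tm" unfolding v_def shift_def by auto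
  have a0: "\<And>k. a (Suc k) < a 0"
  proof -
    fix k
    have "lex_less (shift (Suc k) v) (shift 0 v)" unfolding sh
      by (rule lex_wit[of 0]) (auto simp: shift_def v_def intro: le_less_trans[OF tm_le1])
    then show "a (Suc k) < a 0" using ord by blast
  qed
  have a2: "\<And>i. i \<noteq> 0 \<Longrightarrow> i \<noteq> 2 \<Longrightarrow> a i < a 2"
  proof -
    fix i :: nat assume i: "i \<noteq> 0" "i \<noteq> 2"
    then obtain k where k: "i = Suc k" "k \<noteq> 1" by (cases i) auto
    have "atm k \<noteq> atm 1" using k(2) atm_inj_aux by blast
    then have "atm k < atm 1" using atm_range[of k] atm1 by simp
    then have "lex_less (shift k tm) (shift 1 tm)" using atm_represents by blast
    then have "lex_less (shift i v) (shift 2 v)" using sh[of k] sh[of 1] k(1) by (simp add: numeral_2_eq_2)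
    then show "a i < a 2" using ord by blast
  qed
  have rng: "0 \<le> a 2" "a 2 \<le> 1" "a 0 \<le> 1" using a(1) unfolding canonical_def by auto
  have lt: "a 2 < a 0" using a0[of 1] by (simp add: numeral_2_eq_2)
  define d where "d = 1 - a 2"
  have d: "d > 0" using lt rng unfolding d_def by simp
  obtain M where M: "\<forall>n\<ge>M. \<forall>j. \<bar>real (card {k. k < n \<and> a (j + k) < a 2}) / real n - a 2\<bar> < d/2"
    using a(1) rng d unfolding canonical_def by (meson atLeastAtMost_iff half_gt_zero)
  define n where "n = max M (nat \<lceil>4/d\<rceil> + 3)"
  have n: "n \<ge> M" "n \<ge> 3" "real n > 4/d" unfolding n_def
    using of_nat_ceiling[of "4/d"] by (auto simp: max_def)
  have S: "{k. k < n \<and> a (0 + k) < a 2} = {..<n} - {0, 2}"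
    using a2 lt by auto
  have card: "card {k. k < n \<and> a (0 + k) < a 2} = n - 2" unfolding S using n(2) by (simp add: card_Diff_subset)
  have "\<bar>real (n - 2) / real n - a 2\<bar> < d/2" using M n(1) card by (metis)
  moreover have "real (n-2) / real n = 1 - 2 / real n" using n(2) by (simp add: field_simps of_nat_diff)
  moreover have "2 / real n < d / 2"
  proof -
    have np: "real n > 0" using n(2) by simp
    have "4 < d * real n" using n(3) d by (simp add: field_simps)
    then show ?thesis using np by (simp add: field_simps)
  qed
  ultimately have "\<bar>1 - 2 / real n - a 2\<bar> < d/2" "2 / real n < d/2" by simp_all
  then have "1 - 2 / real n - a 2 < d/2" "2 / real n < d/2" unfolding abs_less_iff by auto
  then show False using d_def by linarith
qed

theorem mainTheorem8:
  shows "(let w1 = (\<lambda>n. if n = 0 then 0 else tm (n - 1) + 1);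
              b = (\<lambda>n. if n = 0 then 0 else atm (n - 1))
          in ergodic_valid_perm w1 \<and> canonical b \<and> represents_valid_perm w1 b)
       \<and> \<not> ergodic_valid_perm (\<lambda>n. if n = 0 then 2 else tm (n - 1))"
proof -
  have b: "(\<lambda>n. if n = 0 then 0 else atm (n - 1)) = bseq" by (simp add: bseq_def fun_eq_iff)
  show ?thesis unfolding Let_def b ergodic_valid_perm_def using canonical_bseq part1 part2
    unfolding ergodic_valid_perm_def by blast
qed


end
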